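(* Let $\mathcal{A}=(\Sigma,Q,q_0,\delta,F)$ be an alternating safety automaton and $p\in\Sigma$. If no two states of $\mathcal{A}$ are existentially in conflict for $p$, then $\mathcal{A}$ is in existential normal form for $p$, i.e. $\mathcal{L}(\exists^\circ p.\mathcal{A})=\mathcal{L}(\exists p.\mathcal{A})$.
   Context: $\Sigma$ is a finite set of Boolean variables; words are $w\in(2^\Sigma)^\omega$ with $k$-th letter $w[k]$. $L_\Sigma=\Sigma\cup\{\neg a:a\in\Sigma\}$; in a letter $\sigma$, $a$ is true iff $a\in\sigma$ and $\neg a$ iff $a\notin\sigma$. An alternating Büchi automaton $\mathcal{A}=(\Sigma,Q,q_0,\delta,F)$ has finite $Q$, $q_0\in Q$, $F\subseteq Q$ and $\delta:Q\to\mathbb{B}^+(Q\cup L_\Sigma)$ (positive Boolean formulas with $\wedge,\vee$, true, false over atoms in $Q\cup L_\Sigma$). $X\subseteq Q\cup L_\Sigma$ satisfies $\delta(q)$ if $\delta(q)$ is true when exactly the atoms of $X$ are true; $\mathit{mSat}(\delta(q))$ is the set of minimal satisfying sets. A run on $w$ is a $Q$-labeled tree with root labeled $q_0$ such that for each node at depth $k$ labeled $q$, with $S$ the labels of its children, $S\cup\{\ell\in L_\Sigma:\ell\text{ true in }w[k]\}$ satisfies $\delta(q)$; accepting if every infinite branch visits $F$ infinitely often; $\mathcal{L}(\mathcal{A})$ is the set of words with an accepting run. $\mathcal{A}$ is a safety automaton if $F=Q$. $\mathcal{L}(\exists p.\mathcal{A})$ is the set of $w\in(2^{\Sigma\setminus\{p\}})^\omega$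 such that some $w'\in(2^\Sigma)^\omega$ with $w'[k]\setminus\{p\}=w[k]$ for all $k$ lies in $\mathcal{L}(\mathcal{A})$. $\exists^\circ p.\mathcal{A}=(\Sigma\setminus\{p\},Q,q_0,\delta',F)$ with $\delta'(q)=\delta(q)[p\mapsto1]\vee\delta(q)[p\mapsto0]$, where $B[p\mapsto1]$ replaces atom $p$ by true and $\neg p$ by false, and $B[p\mapsto0]$ the reverse. An existential unfolding of $\mathcal{A}$ is a DAG $(V,E)$ with $V\subseteq(Q\cup L_\Sigma)\times\mathbb{N}$, $(q_0,0)\in V$, edges only from $Q\times\{i\}$ to $(Q\cup L_\Sigma)\times\{i+1\}$, where $V,E$ are the smallest sets such that for every $(q,i)\in V$ with $q\in Q$ there is a chosen $X\in\mathit{mSat}(\delta(q))$ with $X\times\{i+1\}\subseteq V$ and $\{(q,i)\}\times(X\times\{i+1\})\subseteq E$ (exactly the successors of $(q,i)$). $\mathit{reach}(v)$ denotes the vertices reachable from $v$ by a (possibly empty) path. Two states $q,q'$ are existentially in conflict for $p$ if there exist an existential unfolding $(V,E)$ and $i\in\mathbb{N}$ with $(q,i),(q',i)\in V$, and $i'\in\mathbb{N}$ with $(p,i')\in\mathit{reach}(q,i)$ and $(\neg p,i')\in\mathit{reach}(q',i)$. *)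

theory Defs
  imports Main
begin

datatype 'v lit = Pos 'v | Neg 'v

type_synonym ('q, 'v) atom = "'q + 'v lit"

datatype ('q, 'v) pbf =
    PTrue
  | PFalse
  | Atom "('q, 'v) atom"
  | PAnd "('q, 'v) pbf" "('q, 'v) pbf"
  | POr "('q, 'v) pbf" "('q, 'v) pbf"

fun sat :: "('q, 'v) atom set \<Rightarrow> ('q, 'v) pbf \<Rightarrow> bool" where
  "sat X PTrue = True"
| "sat X PFalse = False"
| "sat X (Atom a) = (a \<in> X)"
| "sat X (PAnd b1 b2) = (sat X b1 \<and> sat X b2)"
| "sat X (POr b1 b2) = (sat X b1 \<or> sat X b2)"

fun atoms :: "('q, 'v) pbf \<Rightarrow> ('q, 'v) atom set" where
  "atoms PTrue = {}"
| "atoms PFalse = {}"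
| "atoms (Atom a) = {a}"
| "atoms (PAnd b1 b2) = atoms b1 \<union> atoms b2"
| "atoms (POr b1 b2) = atoms b1 \<union> atoms b2"

definition mSat :: "('q, 'v) pbf \<Rightarrow> ('q, 'v) atom set set" where
  "mSat B = {X. sat X B \<and> (\<forall>Y. Y \<subset> X \<longrightarrow> \<not> sat Y B)}"

fun subst_var :: "'v \<Rightarrow> bool \<Rightarrow> ('q, 'v) pbf \<Rightarrow> ('q, 'v) pbf" where
  "subst_var p b PTrue = PTrue"
| "subst_var p b PFalse = PFalse"
| "subst_var p b (Atom (Inl q)) = Atom (Inl q)"
| "subst_var p b (Atom (Inr (Pos a))) =
     (if a = p then (if b then PTrue else PFalse) else Atom (Inr (Pos a)))"
| "subst_var p b (Atom (Inr (Neg a))) =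
     (if a = p then (if b then PFalse else PTrue) else Atom (Inr (Neg a)))"
| "subst_var p b (PAnd b1 b2) = PAnd (subst_var p b b1) (subst_var p b b2)"
| "subst_var p b (POr b1 b2) = POr (subst_var p b b1) (subst_var p b b2)"

record ('q, 'v) aba =
  alph :: "'v set"
  states :: "'q set"
  init :: 'q
  trans :: "'q \<Rightarrow> ('q, 'v) pbf"
  acc :: "'q set"

definition lits :: "'v set \<Rightarrow> ('q, 'v) atom set" where
  "lits \<Sigma> = {Inr (Pos a) | a. a \<in> \<Sigma>} \<union> {Inr (Neg a) | a. a \<in> \<Sigma>}"

definition lits_true :: "'v set \<Rightarrow> 'v set \<Rightarrow> ('q, 'v) atom set" where
  "lits_true \<Sigma> \<sigma> = {Inr (Pos a) | a. a \<in> \<Sigma> \<and> a \<in> \<sigma>} \<union> {Inr (Neg a) | a. a \<in> \<Sigma> \<and> a \<notin> \<sigma>}"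

definition wf_aba :: "('q, 'v) aba \<Rightarrow> bool" where
  "wf_aba A \<longleftrightarrow> finite (alph A) \<and> finite (states A) \<and> init A \<in> states A
     \<and> acc A \<subseteq> states A
     \<and> (\<forall>q \<in> states A. atoms (trans A q) \<subseteq> Inl ` states A \<union> lits (alph A))"

definition safety_aba :: "('q, 'v) aba \<Rightarrow> bool" where
  "safety_aba A \<longleftrightarrow> acc A = states A"

definition is_word :: "'v set \<Rightarrow> (nat \<Rightarrow> 'v set) \<Rightarrow> bool" where
  "is_word \<Sigma> w \<longleftrightarrow> (\<forall>k. w k \<subseteq> \<Sigma>)"

text \<open>A run on w: a Q-labelled tree given by a prefix-closed set T of node addresses
  (lists of child indices, depth = length) and a labelling r.\<close>
definition is_run :: "('q, 'v) aba \<Rightarrow> (nat \<Rightarrow> 'v set) \<Rightarrow> nat list set \<Rightarrow> (nat list \<Rightarrow> 'q) \<Rightarrow> bool" where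
  "is_run A w T r \<longleftrightarrow>
     [] \<in> T \<and> (\<forall>x i. x @ [i] \<in> T \<longrightarrow> x \<in> T) \<and> r [] = init A
     \<and> (\<forall>x \<in> T. r x \<in> states A)
     \<and> (\<forall>x \<in> T. sat (Inl ` {r (x @ [i]) | i. x @ [i] \<in> T} \<union> lits_true (alph A) (w (length x)))
                     (trans A (r x)))"

definition is_branch :: "nat list set \<Rightarrow> (nat \<Rightarrow> nat list) \<Rightarrow> bool" where
  "is_branch T \<pi> \<longleftrightarrow> \<pi> 0 = [] \<and> (\<forall>k. \<pi> k \<in> T \<and> (\<exists>i. \<pi> (Suc k) = \<pi> k @ [i]))"

definition accepting_run :: "('q, 'v) aba \<Rightarrow> (nat \<Rightarrow> 'v set) \<Rightarrow> nat list set \<Rightarrow> (nat list \<Rightarrow> 'q) \<Rightarrow> bool" where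
  "accepting_run A w T r \<longleftrightarrow> is_run A w T r
     \<and> (\<forall>\<pi>. is_branch T \<pi> \<longrightarrow> infinite {k. r (\<pi> k) \<in> acc A})"

definition lang :: "('q, 'v) aba \<Rightarrow> (nat \<Rightarrow> 'v set) set" where
  "lang A = {w. is_word (alph A) w \<and> (\<exists>T r. accepting_run A w T r)}"

definition lang_proj :: "'v \<Rightarrow> ('q, 'v) aba \<Rightarrow> (nat \<Rightarrow> 'v set) set" where
  "lang_proj p A = {w. is_word (alph A - {p}) w \<and>
      (\<exists>w'. is_word (alph A) w' \<and> (\<forall>k. w' k - {p} = w k) \<and> w' \<in> lang A)}"

definition exists_circ :: "'v \<Rightarrow> ('q, 'v) aba \<Rightarrow> ('q, 'v) aba" where
  "exists_circ p A = A\<lparr> alph := alph A - {p},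
      trans := (\<lambda>q. POr (subst_var p True (trans A q)) (subst_var p False (trans A q))) \<rparr>"

text \<open>An existential unfolding is determined by the choice ch q i of a minimal satisfying set
  for each vertex (Inl q, i).\<close>
inductive_set unf_V :: "('q, 'v) aba \<Rightarrow> ('q \<Rightarrow> nat \<Rightarrow> ('q, 'v) atom set) \<Rightarrow> (('q, 'v) atom \<times> nat) set"
  for A ch where
  root: "(Inl (init A), 0) \<in> unf_V A ch"
| succ: "(Inl q, i) \<in> unf_V A ch \<Longrightarrow> x \<in> ch q i \<Longrightarrow> (x, Suc i) \<in> unf_V A ch"

definition unf_E :: "('q, 'v) aba \<Rightarrow> ('q \<Rightarrow> nat \<Rightarrow> ('q, 'v) atom set) \<Rightarrow> ((('q, 'v) atom \<times> nat) \<times> (('q, 'v) atom \<times> nat)) set" where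
  "unf_E A ch = {((Inl q, i), (x, Suc i)) | q i x. (Inl q, i) \<in> unf_V A ch \<and> x \<in> ch q i}"

definition valid_unfolding :: "('q, 'v) aba \<Rightarrow> ('q \<Rightarrow> nat \<Rightarrow> ('q, 'v) atom set) \<Rightarrow> bool" where
  "valid_unfolding A ch \<longleftrightarrow> (\<forall>q i. (Inl q, i) \<in> unf_V A ch \<longrightarrow> ch q i \<in> mSat (trans A q))"

definition reach :: "('q, 'v) aba \<Rightarrow> ('q \<Rightarrow> nat \<Rightarrow> ('q, 'v) atom set) \<Rightarrow> ('q, 'v) atom \<times> nat \<Rightarrow> (('q, 'v) atom \<times> nat) set" where
  "reach A ch v = {u. (v, u) \<in> (unf_E A ch)\<^sup>*}"

definition ex_conflict :: "('q, 'v) aba \<Rightarrow> 'v \<Rightarrow> 'q \<Rightarrow> 'q \<Rightarrow> bool" where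
  "ex_conflict A p q q' \<longleftrightarrow>
     (\<exists>ch i i'. valid_unfolding A ch \<and> (Inl q, i) \<in> unf_V A ch \<and> (Inl q', i) \<in> unf_V A ch
        \<and> (Inr (Pos p), i') \<in> reach A ch (Inl q, i) \<and> (Inr (Neg p), i') \<in> reach A ch (Inl q', i))"

end

theory Submission
  imports Defs
begin

lemma sat_mono: "X \<subseteq> Y \<Longrightarrow> sat X B \<Longrightarrow> sat Y B"
  by (induction B) auto

lemma sat_restrict: "atoms B \<subseteq> Y \<Longrightarrow> sat X B = sat (X \<inter> Y) B"
  by (induction B) auto

lemma finite_atoms: "finite (atoms B)"
  by (induction B) auto

definition plit :: "'v \<Rightarrow> bool \<Rightarrow> ('q, 'v) atom" where
  "plit p b = (if b then Inr (Pos p) else Inr (Neg p))"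

lemma sat_subst:
  "sat X (subst_var p b B) = sat ((X - {Inr (Pos p), Inr (Neg p)}) \<union> {plit p b}) B"
  by (induction p b B rule: subst_var.induct) (auto simp: plit_def)

lemma exists_msat:
  assumes "sat X B" shows "\<exists>M \<subseteq> X. M \<in> mSat B"
proof -
  let ?C = "\<lambda>Y. Y \<subseteq> X \<inter> atoms B \<and> sat Y B"
  have "?C (X \<inter> atoms B)" using assms sat_restrict[of B "atoms B" X] by auto
  then have "\<exists>M. ?C M \<and> (\<forall>Y. ?C Y \<longrightarrow> card M \<le> card Y)" by (rule ex_has_least_nat)
  then obtain M where M: "?C M" and min: "\<forall>Y. ?C Y \<longrightarrow> card M \<le> card Y"
    by iprover
  have "M \<subseteq> atoms B" using M by simp
  then have fin: "finite M" using finite_atoms[of B] by (rule finite_subset)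
  have "M \<in> mSat B"
    unfolding mSat_def
  proof (intro CollectI conjI allI impI notI)
    show "sat M B" using M by blast
  next
    fix Y assume "Y \<subset> M" "sat Y B"
    then have "?C Y" using M by blast
    moreover have "card Y < card M" using fin \<open>Y \<subset> M\<close> by (rule psubset_card_mono)
    ultimately show False using min by (meson not_le)
  qed
  then show ?thesis using M by blast
qed

lemma exists_circ_simps[simp]:
  "alph (exists_circ p A) = alph A - {p}"
  "states (exists_circ p A) = states A"
  "init (exists_circ p A) = init A"
  "acc (exists_circ p A) = acc A"
  "trans (exists_circ p A) q = POr (subst_var p True (trans A q)) (subst_var p False (trans A q))"
  by (auto simp: exists_circ_def)

inductive_set tree_of :: "('q \<Rightarrow> nat \<Rightarrow> ('q, 'v) atom set) \<Rightarrow> ('q \<Rightarrow> nat) \<Rightarrow> (nat list \<Rightarrow> 'q) \<Rightarrow> nat list set"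
  for ch f lab where
  tnil: "[] \<in> tree_of ch f lab"
| tsnoc: "x \<in> tree_of ch f lab \<Longrightarrow> Inl q \<in> ch (lab x) (length x) \<Longrightarrow> x @ [f q] \<in> tree_of ch f lab"

lemma proj_subset:
  assumes safe: "safety_aba A" and pA: "p \<in> alph A"
  shows "lang_proj p A \<subseteq> lang (exists_circ p A)"
proof
  fix w assume "w \<in> lang_proj p A"
  then obtain w' T r where ww: "is_word (alph A - {p}) w" "is_word (alph A) w'"
    "\<forall>k. w' k - {p} = w k" and run: "is_run A w' T r"
    unfolding lang_proj_def lang_def accepting_run_def by blast
  have "is_run (exists_circ p A) w T r"
    unfolding is_run_def
  proof (intro conjI ballI)
    fix x assume xT: "x \<in> T"
    let ?S = "Inl ` {r (x @ [i]) | i. x @ [i] \<in> T}"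
    let ?k = "length x"
    let ?b = "p \<in> w' ?k"
    have s0: "sat (?S \<union> lits_true (alph A) (w' ?k)) (trans A (r x))"
      using run xT unfolding is_run_def by blast
    have sub: "?S \<union> lits_true (alph A) (w' ?k) \<subseteq>
       ((?S \<union> lits_true (alph A - {p}) (w ?k)) - {Inr (Pos p), Inr (Neg p)}) \<union> {plit p ?b}"
    proof
      fix a assume a: "a \<in> ?S \<union> lits_true (alph A) (w' ?k)"
      have e: "\<And>c. c \<noteq> p \<Longrightarrow> (c \<in> w' ?k) = (c \<in> w ?k)" using ww(3) by blast
      show "a \<in> ((?S \<union> lits_true (alph A - {p}) (w ?k)) - {Inr (Pos p), Inr (Neg p)}) \<union> {plit p ?b}"
      proof (cases "a \<in> ?S")
        case True then show ?thesis by auto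
      next
        case False
        then have "a \<in> lits_true (alph A) (w' ?k)" using a by blast
        then obtain c where "c \<in> alph A" and
          c: "(a = Inr (Pos c) \<and> c \<in> w' ?k) \<or> (a = Inr (Neg c) \<and> c \<notin> w' ?k)"
          unfolding lits_true_def by blast
        show ?thesis
        proof (cases "c = p")
          case True then show ?thesis using c by (auto simp: plit_def)
        next
          case False
          then have "a \<in> lits_true (alph A - {p}) (w ?k)"
            using c e[OF False] \<open>c \<in> alph A\<close> unfolding lits_true_def by blast
          then show ?thesis using c False by blast
        qed
      qed
    qed
    have "sat (((?S \<union> lits_true (alph A - {p}) (w ?k)) - {Inr (Pos p), Inr (Neg p)}) \<union> {plit p ?b}) (trans A (r x))"
      using sat_mono[OF sub s0] .
    then have "sat (?S \<union> lits_true (alph A - {p}) (w ?k)) (subst_var p ?b (trans A (r x)))"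
      unfolding sat_subst .
    then show "sat (?S \<union> lits_true (alph (exists_circ p A)) (w ?k)) (trans (exists_circ p A) (r x))"
      by (cases ?b) auto
  qed (use run in \<open>auto simp: is_run_def\<close>)
  moreover have "\<forall>\<pi>. is_branch T \<pi> \<longrightarrow> infinite {k. r (\<pi> k) \<in> acc (exists_circ p A)}"
  proof (intro allI impI)
    fix \<pi> assume "is_branch T \<pi>"
    then have "\<forall>k. r (\<pi> k) \<in> acc A" using run safe unfolding is_branch_def is_run_def safety_aba_def by blast
    then show "infinite {k. r (\<pi> k) \<in> acc (exists_circ p A)}" by simp
  qed
  ultimately show "w \<in> lang (exists_circ p A)"
    using ww(1) unfolding lang_def accepting_run_def by (simp del: exists_circ_simps(4)) blast
qed

lemma circ_subset:
  fixes A :: "('q, 'v) aba" and p :: 'v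
  assumes wf: "wf_aba A" and safe: "safety_aba A" and pA: "p \<in> alph A"
    and nc: "\<forall>q \<in> states A. \<forall>q' \<in> states A. \<not> ex_conflict A p q q'"
  shows "lang (exists_circ p A) \<subseteq> lang_proj p A"
proof
  fix w assume "w \<in> lang (exists_circ p A)"
  then obtain T r where ww: "is_word (alph A - {p}) w" and run: "is_run (exists_circ p A) w T r"
    unfolding lang_def accepting_run_def by auto
  define S where "S x = {r (x @ [i]) | i. x @ [i] \<in> T}" for x
  define L where "L k = (lits_true (alph A - {p}) (w k) :: ('q, 'v) atom set)" for k
  define good where "good q k M \<longleftrightarrow> M \<in> mSat (trans A q) \<and>
     (\<exists>x\<in>T. length x = k \<and> r x = q \<and> (\<exists>b. M \<subseteq> Inl ` S x \<union> L k \<union> {plit p b}))" for q k M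
  define ch where "ch q k = (SOME M. good q k M)" for q k
  define V where "V = unf_V A ch"
  have runT: "r x \<in> states A \<and> sat (Inl ` S x \<union> L (length x))
      (POr (subst_var p True (trans A (r x))) (subst_var p False (trans A (r x))))" if "x \<in> T" for x
    using run that unfolding is_run_def S_def L_def by simp
  have Lr: "L k \<subseteq> range Inr" for k unfolding L_def lits_true_def by blast
  have A1: "\<exists>M. good (r x) (length x) M" if "x \<in> T" for x
  proof -
    from runT[OF that] obtain b where "sat (Inl ` S x \<union> L (length x)) (subst_var p b (trans A (r x)))"
      by (metis sat.simps(5))
    then have "sat ((Inl ` S x \<union> L (length x)) - {Inr (Pos p), Inr (Neg p)} \<union> {plit p b}) (trans A (r x))"
      unfolding sat_subst .
    then obtain M where "M \<subseteq> (Inl ` S x \<union> L (length x)) - {Inr (Pos p), Inr (Neg p)} \<union> {plit p b}"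
      "M \<in> mSat (trans A (r x))" using exists_msat by blast
    then show ?thesis unfolding good_def using that by blast
  qed
  have A2: "\<forall>q. a = Inl q \<longrightarrow> (\<exists>x\<in>T. length x = k \<and> r x = q)" if "(a, k) \<in> V" for a k
    using that unfolding V_def
  proof (induction rule: unf_V.induct)
    case root
    then show ?case using run by (auto simp: is_run_def intro!: bexI[of _ "[]"])
  next
    case (succ q i a)
    from succ.IH obtain x where x: "x\<in>T" "length x = i" "r x = q" by blast
    have "good q i (ch q i)" using A1[OF x(1)] x unfolding ch_def by (metis someI_ex)
    then obtain y b where y: "y \<in> T" "length y = i" "r y = q" "ch q i \<subseteq> Inl ` S y \<union> L i \<union> {plit p b}"
      unfolding good_def by blast
    show ?case
    proof (intro allI impI)
      fix q' assume "a = Inl q'"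
      then have m: "Inl q' \<in> Inl ` S y \<union> L i \<union> {plit p b}" using y(4) succ.hyps(2) by blast
      have "Inl q' \<notin> L i" using Lr[of i] by blast
      moreover have "Inl q' \<noteq> plit p b" by (simp add: plit_def)
      ultimately have "Inl q' \<in> Inl ` S y" using m by blast
      then obtain j where "y @ [j] \<in> T" "r (y @ [j]) = q'" unfolding S_def by auto
      then show "\<exists>x\<in>T. length x = Suc i \<and> r x = q'" using y(2) by (intro bexI[of _ "y @ [j]"]) auto
    qed
  qed
  have B: "good q k (ch q k) \<and> q \<in> states A" if "(Inl q, k) \<in> V" for q k
  proof -
    from A2[OF that] obtain x where x: "x\<in>T" "length x = k" "r x = q" by blast
    have "good q k (ch q k)" using A1[OF x(1)] x unfolding ch_def by (metis someI_ex)
    then show ?thesis using runT[OF x(1)] x by simp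
  qed
  have Vstep: "(a, Suc k) \<in> V" if "(Inl q, k) \<in> V" "a \<in> ch q k" for q k a
    using that unfolding V_def by (simp add: unf_V.succ)
  have valid: "valid_unfolding A ch"
    unfolding valid_unfolding_def using B good_def V_def by blast
  define Qk where "Qk k \<longleftrightarrow> (\<exists>q. (Inl q, k) \<in> V \<and> Inr (Pos p) \<in> ch q k)" for k
  define w' where "w' k = w k \<union> {a. a = p \<and> Qk k}" for k
  have C: "\<not> Qk k" if "(Inl q', k) \<in> V" "Inr (Neg p) \<in> ch q' k" for q' k
  proof
    assume "Qk k"
    then obtain q1 where q1: "(Inl q1, k) \<in> V" "Inr (Pos p) \<in> ch q1 k" unfolding Qk_def by blast
    have "((Inl q1, k), (Inr (Pos p), Suc k)) \<in> unf_E A ch"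
      using q1 unfolding unf_E_def V_def by blast
    then have r1: "(Inr (Pos p), Suc k) \<in> reach A ch (Inl q1, k)" unfolding reach_def by blast
    have "((Inl q', k), (Inr (Neg p), Suc k)) \<in> unf_E A ch"
      using that unfolding unf_E_def V_def by blast
    then have r2: "(Inr (Neg p), Suc k) \<in> reach A ch (Inl q', k)" unfolding reach_def by blast
    have "ex_conflict A p q1 q'" unfolding ex_conflict_def
      using valid q1(1) that(1) r1 r2 unfolding V_def by blast
    moreover have "q1 \<in> states A" "q' \<in> states A" using B q1(1) that(1) by auto
    ultimately show False using nc by blast
  qed
  have D: "sat (Inl ` {q'. Inl q' \<in> ch q k} \<union> lits_true (alph A) (w' k)) (trans A q)"
    if qV: "(Inl q, k) \<in> V" for q k
  proof -
    from B[OF qV] obtain y b where g: "ch q k \<in> mSat (trans A q)"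
      "ch q k \<subseteq> Inl ` S y \<union> L k \<union> {plit p b}"
      unfolding good_def by blast
    have "sat (ch q k) (trans A q)" using g(1) unfolding mSat_def by blast
    moreover have "ch q k \<subseteq> Inl ` {q'. Inl q' \<in> ch q k} \<union> lits_true (alph A) (w' k)"
    proof
      fix a assume a: "a \<in> ch q k"
      show "a \<in> Inl ` {q'. Inl q' \<in> ch q k} \<union> lits_true (alph A) (w' k)"
      proof (cases a)
        case (Inl q'') then show ?thesis using a by blast
      next
        case (Inr l)
        then have "a \<in> L k \<or> a = plit p b" using a g(2) by blast
        then show ?thesis
        proof
          assume "a \<in> L k"
          then obtain c where c: "c \<in> alph A" "c \<noteq> p"
            "(a = Inr (Pos c) \<and> c \<in> w k) \<or> (a = Inr (Neg c) \<and> c \<notin> w k)"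
            unfolding L_def lits_true_def by blast
          have "(c \<in> w' k) = (c \<in> w k)" using c(2) unfolding w'_def by blast
          then have "a \<in> lits_true (alph A) (w' k)" using c unfolding lits_true_def by blast
          then show ?thesis by blast
        next
          assume ap: "a = plit p b"
          show ?thesis
          proof (cases b)
            case True
            then have "Qk k" using ap a qV unfolding Qk_def plit_def by auto
            then have "p \<in> w' k" unfolding w'_def by blast
            then show ?thesis using True ap pA unfolding plit_def lits_true_def by simp
          next
            case False
            then have "\<not> Qk k" using C[OF qV] ap a unfolding plit_def by auto
            moreover have "p \<notin> w k" using ww unfolding is_word_def by blast
            ultimately have "p \<notin> w' k" unfolding w'_def by blast
            then show ?thesis using False ap pA unfolding plit_def lits_true_def by simp
          qed
        qed
      qed
    qed
    ultimately show ?thesis using sat_mono by blast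
  qed
  have "finite (states A)" using wf unfolding wf_aba_def by blast
  then obtain f :: "'q \<Rightarrow> nat" and n where inj: "inj_on f (states A)"
    using finite_imp_inj_to_nat_seg by blast
  define g where "g = inv_into (states A) f"
  define lab where "lab x = (if x = [] then init A else g (last x))" for x
  define T' where "T' = tree_of ch f lab"
  have gf: "g (f q) = q" if "q \<in> states A" for q
    unfolding g_def using inj that by (simp add: inv_into_f_f)
  have E: "(Inl (lab x), length x) \<in> V" if "x \<in> T'" for x
    using that unfolding T'_def
  proof (induction rule: tree_of.induct)
    case tnil
    then show ?case unfolding lab_def V_def by (simp add: unf_V.root)
  next
    case (tsnoc x q)
    have qV: "(Inl q, Suc (length x)) \<in> V" using Vstep[OF tsnoc.IH tsnoc.hyps(2)] .
    then have "q \<in> states A" using B by blast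
    then have "lab (x @ [f q]) = q" unfolding lab_def using gf by simp
    then show ?case using qV by simp
  qed
  have lab_states: "lab x \<in> states A" if "x \<in> T'" for x using E[OF that] B by blast
  have run': "is_run A w' T' lab"
    unfolding is_run_def
  proof (intro conjI ballI allI impI)
    show "[] \<in> T'" unfolding T'_def by (rule tree_of.tnil)
  next
    fix x i assume "x @ [i] \<in> T'"
    then show "x \<in> T'" unfolding T'_def by (cases rule: tree_of.cases) auto
  next
    show "lab [] = init A" unfolding lab_def by simp
  next
    fix x assume "x \<in> T'" then show "lab x \<in> states A" by (rule lab_states)
  next
    fix x assume xT: "x \<in> T'"
    have sub: "{q'. Inl q' \<in> ch (lab x) (length x)} \<subseteq> {lab (x @ [i]) | i. x @ [i] \<in> T'}"
    proof
      fix q' assume "q' \<in> {q'. Inl q' \<in> ch (lab x) (length x)}"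
      then have q': "Inl q' \<in> ch (lab x) (length x)" by simp
      have "x @ [f q'] \<in> T'" using xT q' unfolding T'_def by (rule tree_of.tsnoc)
      moreover have "q' \<in> states A" using Vstep[OF E[OF xT] q'] B by blast
      then have "lab (x @ [f q']) = q'" unfolding lab_def using gf by simp
      ultimately show "q' \<in> {lab (x @ [i]) | i. x @ [i] \<in> T'}" by force
    qed
    have "sat (Inl ` {q'. Inl q' \<in> ch (lab x) (length x)} \<union> lits_true (alph A) (w' (length x))) (trans A (lab x))"
      using D[OF E[OF xT]] .
    then show "sat (Inl ` {lab (x @ [i]) | i. x @ [i] \<in> T'} \<union> lits_true (alph A) (w' (length x))) (trans A (lab x))"
      by (rule sat_mono[rotated]) (use sub in blast)
  qed
  have acc': "accepting_run A w' T' lab"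
    unfolding accepting_run_def
  proof (intro conjI allI impI)
    show "is_run A w' T' lab" by (rule run')
  next
    fix \<pi> assume "is_branch T' \<pi>"
    then have "\<forall>k. lab (\<pi> k) \<in> acc A" using lab_states safe unfolding is_branch_def safety_aba_def by blast
    then show "infinite {k. lab (\<pi> k) \<in> acc A}" by simp
  qed
  have pw: "p \<notin> w k" for k using ww unfolding is_word_def by blast
  have w'w: "w' k - {p} = w k" for k using pw unfolding w'_def by blast
  have iw': "is_word (alph A) w'" using ww pA unfolding is_word_def w'_def by blast
  show "w \<in> lang_proj p A"
    unfolding lang_proj_def lang_def using ww w'w iw' acc' by blast
qed

theorem mainTheorem4:
  fixes A :: "('q, 'v) aba" and p :: 'v
  assumes "wf_aba A" and "safety_aba A" and "p \<in> alph A"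
    and "\<forall>q \<in> states A. \<forall>q' \<in> states A. \<not> ex_conflict A p q q'"
  shows "lang (exists_circ p A) = lang_proj p A"
  using circ_subset[OF assms] proj_subset[OF assms(2,3)] by blast

end
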